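(* Let $q$ be a prime power, $v\ge2$, and let $u,m\ge0$ and $\Delta\ge1$ be integers. Let $\mathcal{C}$ be a set of points of $\mathrm{PG}(v-1,q)$ with $|\mathcal{C}|=u+m\Delta$ such that every hyperplane $H$ satisfies $|\mathcal{C}\cap H|\in\{u,u+\Delta,\dots,u+m\Delta\}$. Then $u<\frac{m\Delta}{q-1}$ or $u=m=0$.
   Context: $\mathrm{PG}(v-1,q)$ is the set of $1$-dimensional subspaces (points) of $\mathbb{F}_q^v$; hyperplanes are the $(v-1)$-dimensional subspaces of $\mathbb{F}_q^v$, and $\mathcal{C}\cap H$ is the set of points of $\mathcal{C}$ contained in $H$. *)

theory Defs
  imports Complex_Main "HOL-Library.Function_Algebras"
begin

text \<open>Ambient space F_q^v modelled as functions 'n \<Rightarrow> 'a with 'n finite, card (UNIV :: 'n set) = v,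
  and 'a a finite field with q = CARD('a).\<close>

definition fscale :: "'a::field \<Rightarrow> ('n \<Rightarrow> 'a) \<Rightarrow> ('n \<Rightarrow> 'a)" where
  "fscale c x = (\<lambda>i. c * x i)"

definition pg_points :: "('n::finite \<Rightarrow> 'a::{finite,field}) set set" where
  "pg_points = {S. module.subspace fscale S \<and> vector_space.dim fscale S = 1}"

definition pg_hyperplanes :: "('n::finite \<Rightarrow> 'a::{finite,field}) set set" where
  "pg_hyperplanes = {S. module.subspace fscale S \<and> vector_space.dim fscale S = card (UNIV :: 'n set) - 1}"

end

theory Submission
  imports Defs "HOL-Library.FuncSet"
begin

lemma sum_fun_apply: "(\<Sum>v\<in>T. (f v :: 'n \<Rightarrow> 'a::comm_monoid_add)) i = (\<Sum>v\<in>T. f v i)"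
  by (induction T rule: infinite_finite_induct) auto

interpretation fs: vector_space "fscale :: 'a::field \<Rightarrow> ('n \<Rightarrow> 'a) \<Rightarrow> _"
  by unfold_locales (auto simp: fscale_def fun_eq_iff algebra_simps)

definition ev :: "'n \<Rightarrow> 'n \<Rightarrow> 'a::field" where "ev i = (\<lambda>k. if k = i then 1 else 0)"

lemma ev_indep: "fs.independent (range (ev :: 'n \<Rightarrow> 'n \<Rightarrow> 'a::field))"
proof
  assume "fs.dependent (range (ev :: 'n \<Rightarrow> 'n \<Rightarrow> 'a))"
  then obtain t u where t: "finite t" "t \<subseteq> range (ev :: 'n \<Rightarrow> 'n \<Rightarrow> 'a)"
    "(\<Sum>v\<in>t. fscale (u v) v) = 0" and w: "\<exists>v\<in>t. u v \<noteq> 0"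
    unfolding fs.dependent_explicit by blast
  from w obtain i where i: "ev i \<in> t" "u (ev i) \<noteq> 0" using t(2) by blast
  have "0 = (\<Sum>v\<in>t. fscale (u v) v) i" using t(3) by simp
  also have "\<dots> = (\<Sum>v\<in>t. u v * v i)" by (simp add: sum_fun_apply fscale_def)
  also have "\<dots> = (\<Sum>v\<in>{ev i}. u v * v i)"
  proof (rule sum.mono_neutral_right)
    show "\<forall>v\<in>t - {ev i}. u v * v i = 0"
    proof
      fix v assume "v \<in> t - {ev i}"
      then obtain j where "v = ev j" "j \<noteq> i" using t(2) by auto
      then show "u v * v i = 0" by (simp add: ev_def)
    qed
  qed (use t i in auto)
  also have "\<dots> = u (ev i)" by (simp add: ev_def)
  finally show False using i by simp
qed

lemma ev_span: "fs.span (range (ev :: 'n::finite \<Rightarrow> 'n \<Rightarrow> 'a::field)) = UNIV"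
proof -
  { fix x :: "'n \<Rightarrow> 'a"
    have "x = (\<Sum>i\<in>UNIV. fscale (x i) (ev i))"
    proof
      fix k show "x k = (\<Sum>i\<in>UNIV. fscale (x i) (ev i)) k"
        by (simp add: sum_fun_apply fscale_def ev_def if_distrib cong: if_cong)
    qed
    also have "\<dots> \<in> fs.span (range ev)"
      by (intro fs.span_sum fs.span_scale fs.span_base) auto
    finally have "x \<in> fs.span (range ev)" . }
  then show ?thesis by auto
qed

lemma ev_inj: "inj (ev :: 'n \<Rightarrow> 'n \<Rightarrow> 'a::field)"
  by (rule injI) (metis ev_def one_neq_zero)

interpretation fsf: finite_dimensional_vector_space "fscale :: 'a::field \<Rightarrow> ('n::finite \<Rightarrow> 'a) \<Rightarrow> _" "range ev"
  by unfold_locales (auto simp: ev_indep ev_span)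

lemma dim_UNIV_fs: "fs.dim (UNIV :: ('n::finite \<Rightarrow> 'a::field) set) = card (UNIV :: 'n set)"
  using fsf.dim_UNIV[where 'a='a and 'n='n] card_image[OF ev_inj[where 'a='a and 'n='n]] by simp

definition hyp :: "('n::finite \<Rightarrow> 'a::field) \<Rightarrow> ('n \<Rightarrow> 'a) set" where
  "hyp c = {x. (\<Sum>i\<in>UNIV. c i * x i) = 0}"

lemma hyp_subspace: "fs.subspace (hyp c)"
  unfolding fs.subspace_def hyp_def
  by (auto simp: fscale_def algebra_simps sum.distrib simp flip: sum_distrib_left)

lemma hyp_pg: fixes c :: "'n::finite \<Rightarrow> 'a::{finite,field}" assumes "c \<noteq> 0" shows "hyp c \<in> pg_hyperplanes"
proof -
  obtain j where j: "c j \<noteq> 0" using assms by (auto simp: fun_eq_iff)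
  have cx0: "(\<Sum>i\<in>UNIV. c i * ev j i) = c j"
    by (simp add: ev_def if_distrib cong: if_cong)
  have nin: "ev j \<notin> hyp c" using j cx0 by (simp add: hyp_def)
  have sub: "fs.span (hyp c) = hyp c" using hyp_subspace fs.span_eq_iff by blast
  have "hyp c \<subset> UNIV" using nin by auto
  have ps: "fs.span (hyp c) \<subset> fs.span UNIV" using \<open>hyp c \<subset> UNIV\<close> by (simp only: sub fs.span_UNIV)
  have du: "fs.dim (UNIV :: ('n \<Rightarrow> 'a) set) = card (UNIV :: 'n set)" by (rule dim_UNIV_fs)
  have lt: "fs.dim (hyp c) < card (UNIV :: 'n set)" using fsf.dim_psubset[OF ps] unfolding du .
  have "UNIV \<subseteq> fs.span (insert (ev j) (hyp c))"
  proof
    fix y :: "'n \<Rightarrow> 'a"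
    define t where "t = (\<Sum>i\<in>UNIV. c i * y i) / c j"
    have e1: "(\<Sum>i\<in>UNIV. c i * (fscale t (ev j)) i) = t * c j"
      by (simp add: fscale_def ev_def if_distrib cong: if_cong)
    have e2: "(\<Sum>i\<in>UNIV. c i * (y - fscale t (ev j)) i)
       = (\<Sum>i\<in>UNIV. c i * y i) - (\<Sum>i\<in>UNIV. c i * (fscale t (ev j)) i)"
      by (simp add: right_diff_distrib sum_subtractf del: fun_diff_def)
    have "y - fscale t (ev j) \<in> hyp c"
      unfolding hyp_def mem_Collect_eq e2 e1 using j by (simp add: t_def)
    then have "y - fscale t (ev j) \<in> fs.span (insert (ev j) (hyp c))"
      by (meson fs.span_base insertI2)
    moreover have "fscale t (ev j) \<in> fs.span (insert (ev j) (hyp c))"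
      by (intro fs.span_scale fs.span_base) auto
    ultimately have "(y - fscale t (ev j)) + fscale t (ev j) \<in> fs.span (insert (ev j) (hyp c))"
      by (rule fs.span_add)
    then show "y \<in> fs.span (insert (ev j) (hyp c))" by simp
  qed
  then have "fs.dim (UNIV :: ('n \<Rightarrow> 'a) set) \<le> fs.dim (insert (ev j) (hyp c))"
    using fsf.dim_mono by blast
  also have "\<dots> \<le> fs.dim (hyp c) + 1" by (simp add: fsf.dim_insert)
  finally have "card (UNIV :: 'n set) \<le> fs.dim (hyp c) + 1" unfolding du .
  with lt have "fs.dim (hyp c) = card (UNIV :: 'n set) - 1" by linarith
  then show ?thesis unfolding pg_hyperplanes_def using hyp_subspace by auto
qed

lemma point_nonzero: assumes "P \<in> (pg_points :: ('n::finite \<Rightarrow> 'a::{finite,field}) set set)"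
  shows "\<exists>x\<in>P. x \<noteq> 0"
proof (rule ccontr)
  assume "\<not> ?thesis"
  then have "P \<subseteq> {0}" by auto
  then have "fs.span P = fs.span {}"
    by (metis fs.span_empty fs.span_insert_0 fs.span_mono fs.span_zero subset_antisym
        empty_subsetI subset_singletonD)
  then have "fs.dim P = card ({} :: ('n \<Rightarrow> 'a) set)"
    using fs.dim_eq_card[of "{}" P, OF _ fs.independent_empty] by simp
  then have "fs.dim P = 0" by simp
  with assms show False by (simp add: pg_points_def)
qed


lemma card_fun_UNIV: "card (UNIV :: ('n::finite \<Rightarrow> 'a::finite) set) = card (UNIV :: 'a set) ^ card (UNIV :: 'n set)"
proof -
  have "(UNIV :: ('n \<Rightarrow> 'a) set) = PiE UNIV (\<lambda>_. UNIV)" by (auto simp: PiE_def extensional_def)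
  then have "card (UNIV :: ('n \<Rightarrow> 'a) set) = card (PiE (UNIV :: 'n set) (\<lambda>_. (UNIV :: 'a set)))"
    by (simp only:)
  also have "\<dots> = card (UNIV :: 'a set) ^ card (UNIV :: 'n set)" by (subst card_PiE) auto
  finally show ?thesis .
qed

lemma ker_card:
  fixes x :: "'n::finite \<Rightarrow> 'a::{finite,field}"
  assumes "x \<noteq> 0"
  shows "card {c. c \<noteq> 0 \<and> x \<in> hyp c} \<le> card (UNIV :: 'a set) ^ (card (UNIV :: 'n set) - 1) - 1"
proof -
  obtain j where j: "x j \<noteq> 0" using assms by (auto simp: fun_eq_iff)
  define K where "K = {c :: 'n \<Rightarrow> 'a. x \<in> hyp c}"
  have inj: "inj_on (\<lambda>c. restrict c (-{j})) K"
  proof (rule inj_onI)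
    fix c c' assume c: "c \<in> K" and c': "c' \<in> K" and eq: "restrict c (-{j}) = restrict c' (-{j})"
    have off: "c i = c' i" if "i \<noteq> j" for i using eq that by (metis ComplI restrict_apply' singletonD)
    have s: "(\<Sum>i\<in>UNIV. d i * x i) = d j * x j + (\<Sum>i\<in>UNIV - {j}. d i * x i)" for d :: "'n \<Rightarrow> 'a"
      by (simp add: sum.remove)
    have "(\<Sum>i\<in>UNIV - {j}. c i * x i) = (\<Sum>i\<in>UNIV - {j}. c' i * x i)"
      by (rule sum.cong) (auto simp: off)
    moreover have "c j * x j + (\<Sum>i\<in>UNIV - {j}. c i * x i) = 0" using c s[of c] by (simp add: K_def hyp_def)
    moreover have "c' j * x j + (\<Sum>i\<in>UNIV - {j}. c' i * x i) = 0" using c' s[of c'] by (simp add: K_def hyp_def)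
    ultimately have "c j * x j = c' j * x j" by (metis add_right_cancel)
    then have "c j = c' j" using j by simp
    then show "c = c'" using off by (metis ext)
  qed
  have img: "(\<lambda>c. restrict c (-{j})) ` K \<subseteq> PiE (-{j}) (\<lambda>_. (UNIV :: 'a set))" by auto
  have "card K = card ((\<lambda>c. restrict c (-{j})) ` K)" using card_image[OF inj] by simp
  also have "\<dots> \<le> card (PiE (-{j}) (\<lambda>_. (UNIV :: 'a set)))"
    by (rule card_mono[OF _ img]) (simp add: finite_PiE)
  also have "\<dots> = card (UNIV :: 'a set) ^ (card (UNIV :: 'n set) - 1)"
  proof -
    have "-{j} = UNIV - {j}" by auto
    then have "card (-{j}) = card (UNIV :: 'n set) - 1" by (simp add: card_Diff_singleton)
    then show ?thesis by (simp add: card_PiE)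
  qed
  finally have kc: "card K \<le> card (UNIV :: 'a set) ^ (card (UNIV :: 'n set) - 1)" .
  have "0 \<in> K" by (simp add: K_def hyp_def)
  have "{c. c \<noteq> 0 \<and> x \<in> hyp c} = K - {0}" by (auto simp: K_def)
  then have "card {c. c \<noteq> 0 \<and> x \<in> hyp c} = card K - 1" using \<open>0 \<in> K\<close> by simp
  then show ?thesis using kc by simp
qed

lemma card_field_ge2: "card (UNIV :: 'a::{finite,field} set) \<ge> 2"
proof -
  have "card {0, 1 :: 'a} \<le> card (UNIV :: 'a set)" by (rule card_mono) auto
  then show ?thesis by simp
qed


theorem corollary5p4:
  fixes C :: "('n::finite \<Rightarrow> 'a::{finite,field}) set set"
    and u m \<Delta> :: nat
  assumes "card (UNIV :: 'n set) \<ge> 2"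
    and "\<Delta> \<ge> 1"
    and "C \<subseteq> pg_points"
    and "card C = u + m * \<Delta>"
    and "\<forall>H \<in> pg_hyperplanes. card {P \<in> C. P \<subseteq> H} \<in> {u + k * \<Delta> | k. k \<le> m}"
  shows "real u < real (m * \<Delta>) / (real (card (UNIV :: 'a set)) - 1) \<or> (u = 0 \<and> m = 0)"
proof -
  define q where "q = card (UNIV :: 'a set)"
  define v where "v = card (UNIV :: 'n set)"
  define Q where "Q = q ^ (v - 1)"
  define N where "N = {c :: 'n \<Rightarrow> 'a. c \<noteq> 0}"
  define M where "M = m * \<Delta>"
  define A where "A = Q - 1"
  have q2: "q \<ge> 2" unfolding q_def by (rule card_field_ge2)
  have "q ^ 1 \<le> q ^ (v - 1)" by (rule power_increasing) (use assms(1) q2 v_def in auto)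
  then have Q2: "Q \<ge> 2" unfolding Q_def using q2 by simp
  have finN: "finite N" by simp
  have cardN: "card N = q * Q - 1"
  proof -
    have "N = UNIV - {0}" by (auto simp: N_def)
    then have "card N = card (UNIV :: ('n \<Rightarrow> 'a) set) - 1" by (simp add: card_Diff_singleton)
    also have "card (UNIV :: ('n \<Rightarrow> 'a) set) = q ^ v" by (simp add: card_fun_UNIV q_def v_def)
    also have "q ^ v = q * Q"
    proof -
      have "v = Suc (v - 1)" using assms(1) v_def by simp
      then have "q ^ v = q ^ Suc (v - 1)" by (rule arg_cong)
      then show ?thesis unfolding Q_def by simp
    qed
    finally show ?thesis .
  qed
  have finC: "finite C" by simp
  have lower: "u \<le> card {P \<in> C. P \<subseteq> hyp c}" if "c \<in> N" for c
  proof -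
    have "hyp c \<in> pg_hyperplanes" using that hyp_pg by (auto simp: N_def)
    then have "card {P \<in> C. P \<subseteq> hyp c} \<in> {u + k * \<Delta> | k. k \<le> m}" using assms(5) by blast
    then show ?thesis by auto
  qed
  have upper: "card {c \<in> N. P \<subseteq> hyp c} \<le> A" if PC: "P \<in> C" for P
  proof -
    obtain x where x: "x \<in> P" "x \<noteq> 0" using point_nonzero assms(3) PC by blast
    have "{c \<in> N. P \<subseteq> hyp c} \<subseteq> {c. c \<noteq> 0 \<and> x \<in> hyp c}" using x by (auto simp: N_def)
    then have "card {c \<in> N. P \<subseteq> hyp c} \<le> card {c. c \<noteq> 0 \<and> x \<in> hyp c}" by (intro card_mono) auto
    also have "\<dots> \<le> A" using ker_card[OF x(2)] by (simp add: A_def Q_def q_def v_def)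
    finally show ?thesis .
  qed
  have "u * card N = (\<Sum>c\<in>N. u)" by simp
  also have "\<dots> \<le> (\<Sum>c\<in>N. card {P \<in> C. P \<subseteq> hyp c})" by (rule sum_mono) (rule lower)
  also have "\<dots> = (\<Sum>c\<in>N. \<Sum>P\<in>C. if P \<subseteq> hyp c then 1 else 0)"
    by (rule sum.cong) (simp_all add: sum.inter_filter[OF finC, symmetric])
  also have "\<dots> = (\<Sum>P\<in>C. \<Sum>c\<in>N. if P \<subseteq> hyp c then 1 else 0)" by (rule sum.swap)
  also have "\<dots> = (\<Sum>P\<in>C. card {c \<in> N. P \<subseteq> hyp c})"
    by (rule sum.cong) (simp_all add: sum.inter_filter[OF finN, symmetric])
  also have "\<dots> \<le> (\<Sum>P\<in>C. A)" by (rule sum_mono) (rule upper)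
  also have "\<dots> = (u + M) * A" using assms(4) by (simp add: M_def)
  finally have key: "u * (q * Q - 1) \<le> (u + M) * (Q - 1)" using cardN by (simp add: A_def)
  have rk: "real u * (real q * real Q - 1) \<le> (real u + real M) * (real Q - 1)"
  proof -
    have "real (u * (q * Q - 1)) \<le> real ((u + M) * (Q - 1))" using key by linarith
    moreover have "q * Q \<ge> 1" using q2 Q2 by (simp add: Suc_le_eq)
    ultimately show ?thesis using Q2 by (simp add: of_nat_diff)
  qed
  then have rk2: "real u * real Q * (real q - 1) \<le> real M * (real Q - 1)"
    by (simp add: algebra_simps)
  show ?thesis
  proof (cases "M = 0")
    case True
    then have "real u * real Q * (real q - 1) \<le> 0" using rk2 by simp
    moreover have "real Q * (real q - 1) > 0" using Q2 q2 by simp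
    ultimately have "real u \<le> 0" using q2 Q2 by (simp add: mult.assoc mult_le_0_iff)
    then have "u = 0" by simp
    moreover have "m = 0" using True assms(2) by (simp add: M_def)
    ultimately show ?thesis by simp
  next
    case False
    have "real M * (real Q - 1) < real M * real Q" using False by simp
    with rk2 have "real u * real Q * (real q - 1) < real M * real Q" by linarith
    then have "real u * (real q - 1) < real M" using Q2 by (simp add: mult.commute mult.left_commute)
    then have "real u < real M / (real q - 1)" using q2 by (simp add: field_simps)
    then show ?thesis by (simp add: M_def q_def)
  qed
qed

end
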